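(* Let $A\in\mathbb{R}^{m\times n}$ have full column rank, let $b\in\mathbb{R}^m$ be such that $Ax=b$ is consistent, and let $x^*$ be its (unique) solution. Let $G\in\mathbb{R}^{m\times m}$ be symmetric positive definite and put $\widehat G:=A^TGA$ (which is then symmetric positive definite). Let $\Omega$ be a random $n\times l$ matrix with some fixed distribution $\mathcal D$, and let $W:=\Omega(\Omega^T\widehat G\,\Omega)^{\dagger}\Omega^T$, where $\dagger$ denotes the Moore–Penrose pseudoinverse; assume $\mathbb{E}[W]$ exists. Let $\Omega_0,\Omega_1,\dots$ be i.i.d. copies of $\Omega$, let $x^0\in\mathbb{R}^n$ be deterministic, and define $$x^{k+1}=x^k+\Omega_k(\Omega_k^TA^TGA\Omega_k)^{\dagger}\Omega_k^TA^TG\,(b-Ax^k),\qquad k\ge 0,$$ and $e^k:=x^k-x^*$. Let $\rho:=1-\lambda_{\min}\big(\widehat G^{1/2}\,\mathbb{E}[W]\,\widehat G^{1/2}\big)$. Then for every $k\ge 0$, $$\mathbb{E}\big[\|e^{k+1}\|_{\widehat G}^2\big]\le \rho\,\mathbb{E}\big[\|e^{k}\|_{\widehat G}^2\big],\qquad\text{hence}\qquad \mathbb{E}\big[\|e^{k}\|_{\widehat G}^2\big]\le \rho^k\,\|e^0\|_{\widehat G}^2,$$ and $\rho<1$ whenever $\mathbb{E}[W]$ is positive definite.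
   Context: For a symmetric positive definite matrix $M$, $\|x\|_M:=\sqrt{x^TMx}$. $\lambda_{\min}(\cdot)$ denotes the smallest eigenvalue of a symmetric matrix. Expectations are taken over the random matrices $\Omega_0,\Omega_1,\dots$. *)

theory Defs
  imports "HOL-Analysis.Analysis" "HOL-Probability.Probability"
begin

definition sym_mat :: "real^'n^'n \<Rightarrow> bool" where
  "sym_mat M \<longleftrightarrow> transpose M = M"

definition spd :: "real^'n^'n \<Rightarrow> bool" where
  "spd M \<longleftrightarrow> sym_mat M \<and> (\<forall>x. x \<noteq> 0 \<longrightarrow> x \<bullet> (M *v x) > 0)"

definition spsd :: "real^'n^'n \<Rightarrow> bool" where
  "spsd M \<longleftrightarrow> sym_mat M \<and> (\<forall>x. x \<bullet> (M *v x) \<ge> 0)"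

definition sqnorm_M :: "real^'n^'n \<Rightarrow> real^'n \<Rightarrow> real" where
  "sqnorm_M M x = x \<bullet> (M *v x)"

definition pinv :: "real^'n^'m \<Rightarrow> real^'m^'n" where
  "pinv A = (THE X. A ** X ** A = A \<and> X ** A ** X = X \<and>
                    transpose (A ** X) = A ** X \<and> transpose (X ** A) = X ** A)"

definition eigenvalues :: "real^'n^'n \<Rightarrow> real set" where
  "eigenvalues M = {c. \<exists>v. v \<noteq> 0 \<and> M *v v = c *\<^sub>R v}"

definition lambda_min :: "real^'n^'n \<Rightarrow> real" where
  "lambda_min M = Min (eigenvalues M)"

definition mat_sqrt :: "real^'n^'n \<Rightarrow> real^'n^'n" where
  "mat_sqrt M = (THE S. spsd S \<and> S ** S = M)"

primrec sketch_iter ::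
  "real^'n^'m \<Rightarrow> real^'m \<Rightarrow> real^'m^'m \<Rightarrow> real^'n \<Rightarrow> (nat \<Rightarrow> real^'l^'n) \<Rightarrow> nat \<Rightarrow> real^'n" where
  "sketch_iter A b G x0 \<omega> 0 = x0"
| "sketch_iter A b G x0 \<omega> (Suc k) =
     (let xk = sketch_iter A b G x0 \<omega> k; Om = \<omega> k in
      xk + (Om ** pinv (transpose Om ** transpose A ** G ** A ** Om) ** transpose Om
              ** transpose A ** G) *v (b - A *v xk))"

end

theory Submission
  imports Defs
begin


lemma dot_transpose: "(x::real^'n) \<bullet> (A *v y) = (transpose A *v x) \<bullet> y"
  by (metis dot_lmul_matrix vector_transpose_matrix transpose_transpose inner_commute)

lemma sym_dot: "sym_mat M \<Longrightarrow> (x::real^'n) \<bullet> (M *v y) = (M *v x) \<bullet> y"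
  by (simp add: sym_mat_def dot_transpose)

lemma vec_eq_by_inner: "(\<And>x. x \<bullet> u = x \<bullet> (w::real^'n)) \<Longrightarrow> u = w"
  by (metis inner_diff_left inner_diff_right inner_eq_zero_iff eq_iff_diff_eq_0)

lemma sym_by_inner:
  assumes "\<And>x y. (x::real^'n) \<bullet> (A *v y) = (A *v x) \<bullet> y"
  shows "sym_mat A"
  unfolding sym_mat_def matrix_eq
proof
  fix y
  show "transpose A *v y = A *v y"
    by (rule vec_eq_by_inner) (metis assms dot_transpose inner_commute)
qed

lemma quad_zero:
  fixes c d :: real
  assumes "\<And>t. 0 \<le> 2*t*c + t^2*d"
  shows "c = 0"
proof (rule ccontr)
  assume c: "c \<noteq> 0"
  define a where "a = \<bar>d\<bar> + 1"
  have pos: "a > 0" and ad: "\<bar>d\<bar> = a - 1" by (auto simp: a_def)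
  define t where "t = - c / a"
  have "0 \<le> 2*t*c + t^2*d" by (rule assms)
  also have "\<dots> \<le> 2*t*c + t^2*\<bar>d\<bar>" by (simp add: mult_left_mono)
  also have "\<dots> = c^2 * (- a - 1) / a^2"
    using pos unfolding t_def ad by (simp add: field_simps power2_eq_square)
  also have "\<dots> < 0"
    using c pos by (intro divide_neg_pos mult_pos_neg) auto
  finally show False by simp
qed

lemma quad_expand:
  "(v + t *\<^sub>R w) \<bullet> ((M::real^'n^'n) *v (v + t *\<^sub>R w)) = v \<bullet> (M *v v) + t * (v \<bullet> (M *v w)) + t * (w \<bullet> (M *v v)) + t^2 * (w \<bullet> (M *v w))"
  by (simp add: matrix_vector_right_distrib matrix_vector_mult_scaleR inner_add_left inner_add_right
          algebra_simps power2_eq_square)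

lemma quad_expand_id:
  "(v + t *\<^sub>R w) \<bullet> (v + t *\<^sub>R w) = v \<bullet> v + 2 * t * (v \<bullet> w) + t^2 * (w \<bullet> (w::real^'n))"
  by (simp add: inner_add_left inner_add_right inner_commute algebra_simps power2_eq_square)

lemma psd_null:
  assumes "sym_mat S" and psd: "\<And>x. 0 \<le> (x::real^'n) \<bullet> (S *v x)"
    and v: "v \<bullet> (S *v v) = 0"
  shows "S *v v = 0"
proof -
  let ?w = "S *v v"
  have "0 \<le> 2*t*(?w \<bullet> ?w) + t^2*(?w \<bullet> (S *v ?w))" for t
  proof -
    have "0 \<le> (v + t *\<^sub>R ?w) \<bullet> (S *v (v + t *\<^sub>R ?w))" by (rule psd)
    also have "\<dots> = v \<bullet> (S *v v) + t * (v \<bullet> (S *v ?w)) + t * (?w \<bullet> (S *v v)) + t^2 * (?w \<bullet> (S *v ?w))"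
      by (simp add: matrix_vector_right_distrib matrix_vector_mult_scaleR inner_add_left inner_add_right
          algebra_simps power2_eq_square)
    also have "v \<bullet> (S *v ?w) = ?w \<bullet> ?w" using sym_dot[OF assms(1)] by simp
    finally show ?thesis using v by (simp add: algebra_simps)
  qed
  then have "?w \<bullet> ?w = 0" by (rule quad_zero)
  then show ?thesis by simp
qed


definition eigbasis :: "real^'n^'n \<Rightarrow> (real^'n) set \<Rightarrow> bool" where
  "eigbasis M B \<longleftrightarrow> pairwise orthogonal B \<and> (\<forall>b\<in>B. norm b = 1 \<and> M *v b = (b \<bullet> (M *v b)) *\<^sub>R b)"

lemma spectral_subspace:
  fixes M :: "real^'n^'n"
  assumes sym: "sym_mat M"
  shows "subspace V \<Longrightarrow> (\<forall>x\<in>V. M *v x \<in> V) \<Longrightarrow> \<exists>B. B \<subseteq> V \<and> eigbasis M B \<and> V \<subseteq> span B"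
proof (induction "dim V" arbitrary: V rule: less_induct)
  case less
  show ?case
  proof (cases "V \<subseteq> {0}")
    case True
    show ?thesis
      by (rule exI[of _ "{}"]) (use True in \<open>simp add: eigbasis_def\<close>)
  next
    case False
    then obtain u where u: "u \<in> V" "u \<noteq> 0" by auto
    let ?K = "V \<inter> sphere 0 1"
    let ?q = "\<lambda>x. x \<bullet> (M *v x)"
    have "compact (sphere (0::real^'n) 1 \<inter> V)"
      by (rule compact_Int_closed[OF compact_sphere closed_subspace[OF less.prems(1)]])
    then have "compact ?K" by (simp add: Int_commute)
    moreover have "?K \<noteq> {}"
    proof -
      have "u /\<^sub>R norm u \<in> V" using u less.prems(1) by (simp add: subspace_scale)
      then have "u /\<^sub>R norm u \<in> ?K" using u by simp
      then show ?thesis by blast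
    qed
    moreover have "continuous_on ?K ?q"
      by (rule continuous_on_inner[OF continuous_on_id matrix_vector_mult_linear_continuous_on])
    ultimately have "\<exists>x\<in>?K. \<forall>y\<in>?K. ?q x \<le> ?q y" by (rule continuous_attains_inf)
    then obtain v where v: "v \<in> ?K" and vmin: "\<And>y. y \<in> ?K \<Longrightarrow> ?q v \<le> ?q y"
      by blast
    define l where "l = ?q v"
    have vV: "v \<in> V" and nv: "norm v = 1" using v by simp_all
    have vv: "v \<bullet> v = 1" using nv by (simp add: dot_square_norm)
    have ray: "l * (x \<bullet> x) \<le> ?q x" if "x \<in> V" for x
    proof (cases "x = 0")
      case True then show ?thesis by simp
    next
      case False
      have "x /\<^sub>R norm x \<in> V" using that less.prems(1) by (simp add: subspace_scale)
      then have "x /\<^sub>R norm x \<in> ?K" using False by simp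
      then have 1: "l \<le> ?q (x /\<^sub>R norm x)" unfolding l_def by (rule vmin)
      have 2: "?q (x /\<^sub>R norm x) = (inverse (norm x))^2 * ?q x"
        by (simp add: matrix_vector_mult_scaleR power2_eq_square)
      have 3: "(inverse (norm x))^2 = inverse (x \<bullet> x)"
        by (simp add: power_inverse dot_square_norm)
      from 1 have "l \<le> inverse (x \<bullet> x) * ?q x" unfolding 2 3 .
      then have "l \<le> ?q x / (x \<bullet> x)" by (simp add: divide_inverse mult.commute)
      moreover have "x \<bullet> x > 0" using False by simp
      ultimately show ?thesis by (simp add: pos_le_divide_eq)
    qed
    have eig: "M *v v = l *\<^sub>R v"
    proof -
      let ?w = "M *v v - l *\<^sub>R v"
      have wV: "?w \<in> V" using less.prems vV by (simp add: subspace_diff subspace_scale)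
      let ?r = "\<lambda>x. ?q x - l * (x \<bullet> x)"
      have E: "?w \<bullet> ?w = ?w \<bullet> (M *v v) - l * (v \<bullet> ?w)"
        by (simp add: inner_diff_left inner_diff_right inner_commute right_diff_distrib)
      have S: "v \<bullet> (M *v ?w) = ?w \<bullet> (M *v v)" using sym_dot[OF sym] inner_commute by metis
      have R0: "?r v = 0" using vv by (simp add: l_def)
      have "0 \<le> 2*t*(?w \<bullet> ?w) + t^2 * ?r ?w" for t
      proof -
        have "v + t *\<^sub>R ?w \<in> V" using less.prems(1) vV wV by (simp add: subspace_add subspace_scale)
        then have "l * ((v + t *\<^sub>R ?w) \<bullet> (v + t *\<^sub>R ?w)) \<le> ?q (v + t *\<^sub>R ?w)" by (rule ray)
        then have "0 \<le> ?r (v + t *\<^sub>R ?w)" by linarith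
        also have "?r (v + t *\<^sub>R ?w) = ?r v + t * (v \<bullet> (M *v ?w)) + t * (?w \<bullet> (M *v v))
               - 2 * t * l * (v \<bullet> ?w) + t^2 * ?r ?w"
          unfolding quad_expand quad_expand_id by (simp add: algebra_simps)
        also have "\<dots> = 2*t*(?w \<bullet> ?w) + t^2 * ?r ?w"
          unfolding S R0 E by (simp add: algebra_simps)
        finally show ?thesis .
      qed
      then have "?w \<bullet> ?w = 0" by (rule quad_zero)
      then show ?thesis by simp
    qed
    define V' where "V' = V \<inter> {y. orthogonal v y}"
    have sV': "subspace V'" unfolding V'_def
      by (rule subspace_inter[OF less.prems(1) subspace_orthogonal_to_vector])
    have iV': "\<forall>x\<in>V'. M *v x \<in> V'"
    proof
      fix x assume x: "x \<in> V'"
      have "v \<bullet> (M *v x) = (M *v v) \<bullet> x" by (rule sym_dot[OF sym])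
      also have "\<dots> = 0" using x eig by (simp add: V'_def orthogonal_def)
      finally show "M *v x \<in> V'" using x less.prems by (auto simp: V'_def orthogonal_def)
    qed
    have "dim V' < dim V"
    proof (rule dim_psubset)
      have "V' \<subseteq> V" by (auto simp: V'_def)
      moreover have "v \<notin> V'" using vv by (auto simp: V'_def orthogonal_def)
      ultimately show "span V' \<subset> span V"
      proof -
        have e1: "span V' = V'" "span V = V"
          using span_eq_iff[THEN iffD2, OF sV'] span_eq_iff[THEN iffD2, OF less.prems(1)] by simp_all
        show ?thesis unfolding e1 using \<open>V' \<subseteq> V\<close> \<open>v \<notin> V'\<close> vV by auto
      qed
    qed
    from less.hyps[OF this sV' iV'] obtain B' where B': "B' \<subseteq> V'" "eigbasis M B'" "V' \<subseteq> span B'"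
      by blast
    show ?thesis
    proof (intro exI conjI)
      show "insert v B' \<subseteq> V" using B'(1) vV by (auto simp: V'_def)
      show "eigbasis M (insert v B')"
      proof -
        have "pairwise orthogonal (insert v B')"
          by (rule pairwise_orthogonal_insert) (use B'(1,2) in \<open>auto simp: V'_def eigbasis_def\<close>)
        moreover have "\<forall>b\<in>B'. norm b = 1 \<and> M *v b = (b \<bullet> (M *v b)) *\<^sub>R b" using B'(2) by (simp add: eigbasis_def)
        moreover have "M *v v = (v \<bullet> (M *v v)) *\<^sub>R v" using eig by (simp add: l_def)
        ultimately show ?thesis using nv by (simp add: eigbasis_def)
      qed
      show "V \<subseteq> span (insert v B')"
      proof
        fix x assume x: "x \<in> V"
        have "x - (v \<bullet> x) *\<^sub>R v \<in> V" using x vV less.prems(1) by (simp add: subspace_diff subspace_scale)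
        moreover have "v \<bullet> (x - (v \<bullet> x) *\<^sub>R v) = 0" using vv by (simp add: inner_diff_right)
        ultimately have "x - (v \<bullet> x) *\<^sub>R v \<in> V'" by (simp add: V'_def orthogonal_def)
        then have "x - (v \<bullet> x) *\<^sub>R v \<in> span (insert v B')" using B'(3)
          by (meson span_mono subset_insertI subsetD)
        moreover have "(v \<bullet> x) *\<^sub>R v \<in> span (insert v B')" by (simp add: span_base span_mul)
        ultimately have "x - (v \<bullet> x) *\<^sub>R v + (v \<bullet> x) *\<^sub>R v \<in> span (insert v B')"
          by (rule span_add)
        then show "x \<in> span (insert v B')" by simp
      qed
    qed
  qed
qed

lemma spectral:
  fixes M :: "real^'n^'n"
  assumes "sym_mat M"
  obtains B where "eigbasis M B" "span B = UNIV"
  using spectral_subspace[OF assms, of UNIV] by auto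


definition fc :: "(real^'n) set \<Rightarrow> real^'n^'n \<Rightarrow> (real \<Rightarrow> real) \<Rightarrow> real^'n^'n" where
  "fc B M f = (\<chi> i j. \<Sum>b\<in>B. f (b \<bullet> (M *v b)) * b$i * b$j)"

lemma outer_sum_apply:
  fixes c :: "real^'n \<Rightarrow> real"
  shows "finite B \<Longrightarrow> (\<chi> i j. \<Sum>b\<in>B. c b * b$i * b$j) *v x = (\<Sum>b\<in>B. (c b * (b \<bullet> x)) *\<^sub>R b)"
  apply (simp add: vec_eq_iff matrix_vector_mult_def inner_vec_def sum_component sum_distrib_left
      sum_distrib_right mult.assoc mult.left_commute sum.swap[of _ B])
  apply (intro allI sum.cong refl)
  by (simp add: mult_ac)

lemma fc_apply: "finite B \<Longrightarrow> fc B M f *v x = (\<Sum>b\<in>B. (f (b \<bullet> (M *v b)) * (b \<bullet> x)) *\<^sub>R b)"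
  unfolding fc_def by (rule outer_sum_apply)

lemma eigbasis_finite: "eigbasis M B \<Longrightarrow> finite B"
  unfolding eigbasis_def using pairwise_orthogonal_imp_finite by blast

lemma eigbasis_coeff:
  assumes "eigbasis M B" "b \<in> B"
  shows "b \<bullet> (\<Sum>c\<in>B. a c *\<^sub>R c) = a b"
proof -
  have fin: "finite B" using assms(1) by (rule eigbasis_finite)
  have "b \<bullet> (\<Sum>c\<in>B. a c *\<^sub>R c) = (\<Sum>c\<in>B. a c * (b \<bullet> c))" by (simp add: inner_sum_right)
  also have "\<dots> = (\<Sum>c\<in>B. if c = b then a c else 0)"
  proof (rule sum.cong)
    fix c assume c: "c \<in> B"
    show "a c * (b \<bullet> c) = (if c = b then a c else 0)"
    proof (cases "c = b")
      case True
      then have "b \<bullet> c = 1" using assms c unfolding eigbasis_def by (simp add: dot_square_norm)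
      then show ?thesis using True by simp
    next
      case False
      then have "b \<bullet> c = 0" using assms c unfolding eigbasis_def pairwise_def orthogonal_def by metis
      then show ?thesis using False by simp
    qed
  qed simp
  also have "\<dots> = a b" using fin assms(2) by (simp add: sum.delta')
  finally show ?thesis .
qed

lemma eigbasis_expand:
  assumes "eigbasis M B" "span B = UNIV"
  shows "x = (\<Sum>b\<in>B. (b \<bullet> x) *\<^sub>R b)"
proof -
  let ?y = "x - (\<Sum>b\<in>B. (b \<bullet> x) *\<^sub>R b)"
  have "\<forall>b\<in>B. b \<bullet> ?y = 0"
    using eigbasis_coeff[OF assms(1)] by (simp add: inner_diff_right)
  then have "orthogonal ?y z" if "z \<in> span B" for z
    using orthogonal_to_span[OF that, of ?y] by (simp add: orthogonal_def inner_commute)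
  then have "orthogonal ?y ?y" using assms(2) by simp
  then show ?thesis by (simp add: orthogonal_def)
qed

lemma fc_apply_sum:
  assumes "eigbasis M B"
  shows "fc B M f *v (\<Sum>c\<in>B. a c *\<^sub>R c) = (\<Sum>b\<in>B. (f (b \<bullet> (M *v b)) * a b) *\<^sub>R b)"
  using eigbasis_coeff[OF assms] by (simp add: fc_apply[OF eigbasis_finite[OF assms]])

lemma fc_mult:
  assumes "eigbasis M B"
  shows "fc B M f ** fc B M g = fc B M (\<lambda>t. f t * g t)"
  unfolding matrix_eq
proof
  fix x
  have fin: "finite B" using assms by (rule eigbasis_finite)
  have "(fc B M f ** fc B M g) *v x = fc B M f *v (fc B M g *v x)" by (simp add: matrix_vector_mul_assoc)
  also have "\<dots> = (\<Sum>b\<in>B. (f (b \<bullet> (M *v b)) * (g (b \<bullet> (M *v b)) * (b \<bullet> x))) *\<^sub>R b)"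
    unfolding fc_apply[OF fin, of M g] fc_apply_sum[OF assms] ..
  also have "\<dots> = fc B M (\<lambda>t. f t * g t) *v x" by (simp add: fc_apply[OF fin] mult.assoc)
  finally show "(fc B M f ** fc B M g) *v x = fc B M (\<lambda>t. f t * g t) *v x" .
qed

lemma fc_quad:
  assumes "eigbasis M B"
  shows "x \<bullet> (fc B M f *v y) = (\<Sum>b\<in>B. f (b \<bullet> (M *v b)) * (b \<bullet> x) * (b \<bullet> y))"
  apply (simp add: fc_apply[OF eigbasis_finite[OF assms]] inner_sum_right)
  apply (intro sum.cong refl)
  by (simp add: mult_ac inner_commute)

lemma fc_sym:
  assumes "eigbasis M B"
  shows "sym_mat (fc B M f)"
  apply (rule sym_by_inner)
  apply (subst inner_commute[of "fc B M f *v _"])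
  apply (simp add: fc_quad[OF assms])
  apply (intro sum.cong refl)
  by (simp add: mult_ac)

lemma fc_id:
  assumes "eigbasis M B" "span B = UNIV"
  shows "fc B M (\<lambda>t. t) = M"
  unfolding matrix_eq
proof
  fix x
  have "M *v x = M *v (\<Sum>b\<in>B. (b \<bullet> x) *\<^sub>R b)" using eigbasis_expand[OF assms] by metis
  also have "\<dots> = (\<Sum>b\<in>B. (b \<bullet> x) *\<^sub>R (M *v b))"
    by (simp add: linear_sum[OF matrix_vector_mul_linear] matrix_vector_mult_scaleR)
  also have "\<dots> = (\<Sum>b\<in>B. ((b \<bullet> (M *v b)) * (b \<bullet> x)) *\<^sub>R b)"
  proof (rule sum.cong)
    fix b assume "b \<in> B"
    then have "M *v b = (b \<bullet> (M *v b)) *\<^sub>R b" using assms(1) by (simp add: eigbasis_def)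
    then show "(b \<bullet> x) *\<^sub>R (M *v b) = ((b \<bullet> (M *v b)) * (b \<bullet> x)) *\<^sub>R b"
      by (metis scaleR_scaleR mult.commute)
  qed simp
  also have "\<dots> = fc B M (\<lambda>t. t) *v x" by (simp add: fc_apply[OF eigbasis_finite[OF assms(1)]])
  finally show "fc B M (\<lambda>t. t) *v x = M *v x" by simp
qed

lemma fc_cong:
  assumes "\<And>b. b \<in> B \<Longrightarrow> f (b \<bullet> (M *v b)) = g (b \<bullet> (M *v b))"
  shows "fc B M f = fc B M g"
  unfolding fc_def using assms by (simp add: vec_eq_iff)

lemma fc_psd:
  assumes "eigbasis M B" "\<And>b. b \<in> B \<Longrightarrow> f (b \<bullet> (M *v b)) \<ge> 0"
  shows "x \<bullet> (fc B M f *v x) \<ge> 0"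
  unfolding fc_quad[OF assms(1)] using assms(2) by (intro sum_nonneg) (simp add: mult.assoc)

definition penrose :: "real^'n^'m \<Rightarrow> real^'m^'n \<Rightarrow> bool" where
  "penrose A X \<longleftrightarrow> A ** X ** A = A \<and> X ** A ** X = X \<and>
                    transpose (A ** X) = A ** X \<and> transpose (X ** A) = X ** A"

lemma penrose_unique:
  assumes X: "penrose A X" and Y: "penrose A Y"
  shows "X = Y"
proof -
  have X1: "A ** X ** A = A" and X2: "X ** A ** X = X" and X3: "transpose (A ** X) = A ** X"
    and X4: "transpose (X ** A) = X ** A" using X by (auto simp: penrose_def)
  have Y1: "A ** Y ** A = A" and Y2: "Y ** A ** Y = Y" and Y3: "transpose (A ** Y) = A ** Y"
    and Y4: "transpose (Y ** A) = Y ** A" using Y by (auto simp: penrose_def)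
  have "X = X ** (A ** X)" using X2 by (simp add: matrix_mul_assoc)
  also have "\<dots> = X ** transpose (A ** X)" using X3 by simp
  also have "\<dots> = X ** transpose X ** transpose A" by (simp add: matrix_transpose_mul matrix_mul_assoc)
  also have "\<dots> = X ** transpose X ** transpose (A ** Y ** A)" using Y1 by simp
  also have "\<dots> = X ** (transpose X ** transpose A) ** (transpose Y ** transpose A)"
    by (simp add: matrix_transpose_mul matrix_mul_assoc)
  also have "\<dots> = X ** transpose (A ** X) ** transpose (A ** Y)"
    by (simp add: matrix_transpose_mul)
  also have "\<dots> = X ** A ** X ** A ** Y" using X3 Y3 by (simp add: matrix_mul_assoc)
  also have "\<dots> = X ** A ** Y" using X2 by simp
  finally have 1: "X = X ** A ** Y" .
  have "Y = (Y ** A) ** Y" using Y2 by simp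
  also have "\<dots> = transpose (Y ** A) ** Y" using Y4 by simp
  also have "\<dots> = transpose A ** transpose Y ** Y" by (simp add: matrix_transpose_mul)
  also have "\<dots> = transpose (A ** X ** A) ** transpose Y ** Y" using X1 by simp
  also have "\<dots> = (transpose A ** transpose X) ** (transpose A ** transpose Y) ** Y"
    by (simp add: matrix_transpose_mul matrix_mul_assoc)
  also have "\<dots> = transpose (X ** A) ** transpose (Y ** A) ** Y"
    by (simp add: matrix_transpose_mul)
  also have "\<dots> = X ** A ** (Y ** A ** Y)" using X4 Y4 by (simp add: matrix_mul_assoc)
  also have "\<dots> = X ** A ** Y" using Y2 by simp
  finally have 2: "Y = X ** A ** Y" .
  show ?thesis using 1 2 by simp
qed

lemma pinv_eq: "penrose A X \<Longrightarrow> pinv A = X"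
  unfolding pinv_def
  by (rule the_equality) (auto simp: penrose_def[symmetric] intro: penrose_unique)


lemma fc_zero: "fc B M (\<lambda>t. 0) = 0"
  unfolding fc_def by (simp add: vec_eq_iff)

lemma inv_mult_lemma: "(t::real) * inverse t * t = t" "inverse t * t * inverse t = inverse t"
  by (cases "t = 0"; simp)+

lemma pinv_sym:
  fixes N :: "real^'n^'n"
  assumes "sym_mat N"
  shows "N ** pinv N ** N = N" "pinv N ** N ** pinv N = pinv N" "sym_mat (pinv N)"
    "transpose (N ** pinv N) = N ** pinv N"
    "spsd N \<Longrightarrow> spsd (pinv N)"
proof -
  obtain B where B: "eigbasis N B" "span B = UNIV" using spectral[OF assms] by blast
  let ?X = "fc B N inverse"
  have Nid: "fc B N (\<lambda>t. t) = N" by (rule fc_id[OF B])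
  have m1: "N ** ?X = fc B N (\<lambda>t. t * inverse t)"
    using fc_mult[OF B(1), of "\<lambda>t. t" inverse] unfolding Nid .
  have m2: "?X ** N = fc B N (\<lambda>t. inverse t * t)"
    using fc_mult[OF B(1), of inverse "\<lambda>t. t"] unfolding Nid .
  have P1: "N ** ?X ** N = N"
  proof -
    have "N ** ?X ** N = fc B N (\<lambda>t. t * inverse t * t)"
      using fc_mult[OF B(1), of "\<lambda>t. t * inverse t" "\<lambda>t. t"] unfolding Nid m1 .
    also have "\<dots> = N" unfolding inv_mult_lemma(1) by (rule Nid)
    finally show ?thesis .
  qed
  have P2: "?X ** N ** ?X = ?X"
  proof -
    have "?X ** N ** ?X = fc B N (\<lambda>t. inverse t * t * inverse t)"
      using fc_mult[OF B(1), of "\<lambda>t. inverse t * t" inverse] unfolding m2 .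
    then show ?thesis unfolding inv_mult_lemma(2) .
  qed
  have P3: "transpose (N ** ?X) = N ** ?X"
    using fc_sym[OF B(1), of "\<lambda>t. t * inverse t"] unfolding sym_mat_def m1 .
  have P4: "transpose (?X ** N) = ?X ** N"
    using fc_sym[OF B(1), of "\<lambda>t. inverse t * t"] unfolding sym_mat_def m2 .
  have pe: "pinv N = ?X" by (rule pinv_eq) (simp add: penrose_def P1 P2 P3 P4)
  show "N ** pinv N ** N = N" "pinv N ** N ** pinv N = pinv N" "transpose (N ** pinv N) = N ** pinv N"
    using P1 P2 P3 pe by simp_all
  show "sym_mat (pinv N)" using pe fc_sym[OF B(1)] by simp
  show "spsd (pinv N)" if "spsd N"
  proof -
    have "\<And>b. b \<in> B \<Longrightarrow> 0 \<le> inverse (b \<bullet> (N *v b))" using that by (simp add: spsd_def)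
    then show ?thesis using pe fc_sym[OF B(1)] fc_psd[OF B(1)] by (simp add: spsd_def)
  qed
qed

lemma sym_zero_eig:
  fixes D :: "real^'n^'n"
  assumes "eigbasis D B" "span B = UNIV" "\<And>b. b \<in> B \<Longrightarrow> b \<bullet> (D *v b) = 0"
  shows "D = 0"
proof -
  have "D = fc B D (\<lambda>t. t)" using fc_id[OF assms(1,2)] by simp
  also have "\<dots> = fc B D (\<lambda>t. 0)" by (rule fc_cong) (use assms(3) in simp)
  finally show ?thesis by (simp add: fc_zero)
qed

lemma transpose_diff: "transpose (A - B) = transpose A - transpose (B::real^'n^'m)"
  by (simp add: transpose_def vec_eq_iff)

lemma sqrt_unique:
  fixes S R :: "real^'n^'n"
  assumes S: "spsd S" and R: "spsd R" and eq: "S ** S = R ** R"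
  shows "S = R"
proof -
  define D where "D = S - R"
  have symD: "sym_mat D" using S R by (simp add: spsd_def sym_mat_def transpose_diff D_def)
  obtain B where B: "eigbasis D B" "span B = UNIV" using spectral[OF symD] by blast
  have "D = 0"
  proof (rule sym_zero_eig[OF B])
    fix b assume b: "b \<in> B"
    define mu where "mu = b \<bullet> (D *v b)"
    have Db: "D *v b = mu *\<^sub>R b" using B(1) b by (simp add: eigbasis_def mu_def)
    have bb: "b \<bullet> b = 1" using B(1) b by (simp add: eigbasis_def dot_square_norm)
    have symS: "sym_mat S" and symR: "sym_mat R" using S R by (simp_all add: spsd_def)
    define u where "u = S *v b"
    define w where "w = R *v b"
    have SR: "(S + R) *v b = u + w" by (simp add: u_def w_def matrix_vector_mult_add_rdistrib)
    have SS: "S *v u = R *v w" using eq unfolding u_def w_def by (metis matrix_vector_mul_assoc)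
    have e1: "b \<bullet> ((S + R) *v (D *v b)) = mu * (b \<bullet> u + b \<bullet> w)"
      unfolding Db matrix_vector_mult_scaleR inner_scaleR_right SR inner_add_right by (simp add: distrib_left)
    have e2: "b \<bullet> (D *v ((S + R) *v b)) = mu * (b \<bullet> u + b \<bullet> w)"
    proof -
      have "b \<bullet> (D *v ((S + R) *v b)) = (D *v b) \<bullet> ((S + R) *v b)" by (rule sym_dot[OF symD])
      also have "\<dots> = mu * (b \<bullet> u + b \<bullet> w)"
        unfolding Db SR inner_scaleR_left inner_add_right by (simp add: distrib_left)
      finally show ?thesis .
    qed
    have e3: "b \<bullet> ((S + R) *v (D *v b)) + b \<bullet> (D *v ((S + R) *v b)) = 0"
    proof -
      have "(S + R) *v (D *v b) = S *v u - S *v w + R *v u - R *v w"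
        unfolding D_def u_def w_def
        by (simp add: matrix_vector_mult_add_rdistrib matrix_vector_mult_diff_rdistrib
          matrix_vector_mult_diff_distrib)
      moreover have "D *v ((S + R) *v b) = S *v u + S *v w - R *v u - R *v w"
        unfolding D_def u_def w_def
        by (simp add: matrix_vector_mult_add_rdistrib matrix_vector_mult_diff_rdistrib
          matrix_vector_right_distrib)
      ultimately show ?thesis using SS by (simp add: inner_add_right inner_diff_right)
    qed
    have P: "mu * (b \<bullet> u + b \<bullet> w) = 0" using e1 e2 e3 by simp
    show "b \<bullet> (D *v b) = 0"
    proof (rule ccontr)
      assume "b \<bullet> (D *v b) \<noteq> 0"
      then have mu: "mu \<noteq> 0" by (simp add: mu_def)
      have pu: "0 \<le> b \<bullet> u" "0 \<le> b \<bullet> w" using S R by (simp_all add: spsd_def u_def w_def)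
      with P mu have "b \<bullet> u = 0" "b \<bullet> w = 0" by auto
      then have "u = 0" "w = 0"
        using psd_null[OF symS] psd_null[OF symR] S R by (auto simp: spsd_def u_def w_def)
      then have "D *v b = 0" unfolding D_def u_def w_def by (simp add: matrix_vector_mult_diff_rdistrib)
      then have "mu *\<^sub>R b = 0" using Db by simp
      then show False using mu bb by auto
    qed
  qed
  then show ?thesis by (simp add: D_def)
qed

lemma mat_sqrt:
  fixes M :: "real^'n^'n"
  assumes "spsd M"
  shows "spsd (mat_sqrt M)" "mat_sqrt M ** mat_sqrt M = M"
proof -
  have symM: "sym_mat M" using assms by (simp add: spsd_def)
  obtain B where B: "eigbasis M B" "span B = UNIV" using spectral[OF symM] by blast
  let ?S = "fc B M sqrt"
  have nn: "\<And>b. b \<in> B \<Longrightarrow> 0 \<le> b \<bullet> (M *v b)" using assms by (simp add: spsd_def)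
  have 1: "spsd ?S" unfolding spsd_def
    using fc_sym[OF B(1)] fc_psd[OF B(1)] nn by simp
  have "?S ** ?S = fc B M (\<lambda>t. sqrt t * sqrt t)" by (rule fc_mult[OF B(1)])
  also have "\<dots> = fc B M (\<lambda>t. t)" by (rule fc_cong) (simp add: nn)
  also have "\<dots> = M" by (rule fc_id[OF B])
  finally have 2: "?S ** ?S = M" .
  have "mat_sqrt M = ?S" unfolding mat_sqrt_def
  proof (rule the_equality)
    show "spsd ?S \<and> ?S ** ?S = M" using 1 2 by simp
    show "\<And>S'. spsd S' \<and> S' ** S' = M \<Longrightarrow> S' = ?S" using sqrt_unique 1 2 by metis
  qed
  then show "spsd (mat_sqrt M)" "mat_sqrt M ** mat_sqrt M = M" using 1 2 by simp_all
qed

lemma eig_facts: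
  fixes T :: "real^'n^'n"
  assumes "sym_mat T"
  shows "\<exists>v. v \<noteq> 0 \<and> T *v v = lambda_min T *\<^sub>R v" "\<And>x. lambda_min T * (x \<bullet> x) \<le> x \<bullet> (T *v x)"
proof -
  obtain B where B: "eigbasis T B" "span B = UNIV" using spectral[OF assms] by blast
  have fin: "finite B" using B(1) by (rule eigbasis_finite)
  have ne: "B \<noteq> {}"
  proof
    assume "B = {}"
    then have "(axis undefined 1 :: real^'n) \<in> span {}" using B(2) by simp
    then show False by (simp add: axis_eq_0_iff)
  qed
  let ?ev = "\<lambda>b. b \<bullet> (T *v b)"
  have bnz: "b \<noteq> 0" if "b \<in> B" for b using B(1) that by (auto simp: eigbasis_def)
  have Tb: "T *v b = ?ev b *\<^sub>R b" if "b \<in> B" for b using B(1) that by (simp add: eigbasis_def)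
  have E: "eigenvalues T = ?ev ` B"
  proof
    show "?ev ` B \<subseteq> eigenvalues T" unfolding eigenvalues_def using bnz Tb by blast
    show "eigenvalues T \<subseteq> ?ev ` B"
    proof
      fix c assume "c \<in> eigenvalues T"
      then obtain v where v: "v \<noteq> 0" "T *v v = c *\<^sub>R v" unfolding eigenvalues_def by blast
      have "\<exists>b\<in>B. b \<bullet> v \<noteq> 0"
      proof (rule ccontr)
        assume "\<not> ?thesis"
        then have "(\<Sum>b\<in>B. (b \<bullet> v) *\<^sub>R b) = (\<Sum>b\<in>B. 0 *\<^sub>R b)"
          by (intro sum.cong refl) simp
        then have "v = (\<Sum>b\<in>B. 0 *\<^sub>R b)"
          using eigbasis_expand[OF B, of v] by simp
        then show False using v by simp
      qed
      then obtain b where b: "b \<in> B" "b \<bullet> v \<noteq> 0" by blast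
      have "c * (b \<bullet> v) = b \<bullet> (T *v v)" using v by simp
      also have "\<dots> = (T *v b) \<bullet> v" by (rule sym_dot[OF assms])
      also have "\<dots> = ?ev b * (b \<bullet> v)" by (subst Tb[OF b(1)]) simp
      finally have "c = ?ev b" using b(2) by simp
      then show "c \<in> ?ev ` B" using b by blast
    qed
  qed
  have lmd: "lambda_min T = Min (?ev ` B)" unfolding lambda_min_def E ..
  have lm: "lambda_min T \<in> ?ev ` B" "\<And>b. b \<in> B \<Longrightarrow> lambda_min T \<le> ?ev b"
    unfolding lmd using fin ne by (simp_all add: Min_in)
  then obtain b0 where b0: "b0 \<in> B" "lambda_min T = ?ev b0" by blast
  show "\<exists>v. v \<noteq> 0 \<and> T *v v = lambda_min T *\<^sub>R v"
    using bnz[OF b0(1)] Tb[OF b0(1)] b0(2) by metis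
  fix x
  have xx: "x \<bullet> x = (\<Sum>b\<in>B. (b \<bullet> x) * (b \<bullet> x))"
  proof -
    have "x \<bullet> x = x \<bullet> (\<Sum>b\<in>B. (b \<bullet> x) *\<^sub>R b)" using eigbasis_expand[OF B, of x] by simp
    then show ?thesis by (simp add: inner_sum_right inner_commute)
  qed
  have "x \<bullet> (T *v x) = x \<bullet> (fc B T (\<lambda>t. t) *v x)" using fc_id[OF B] by simp
  also have "\<dots> = (\<Sum>b\<in>B. ?ev b * (b \<bullet> x) * (b \<bullet> x))" by (rule fc_quad[OF B(1)])
  finally have xT: "x \<bullet> (T *v x) = (\<Sum>b\<in>B. ?ev b * (b \<bullet> x) * (b \<bullet> x))" .
  have "lambda_min T * (x \<bullet> x) = (\<Sum>b\<in>B. lambda_min T * (b \<bullet> x) * (b \<bullet> x))"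
    unfolding xx by (simp add: sum_distrib_left mult.assoc)
  also have "\<dots> \<le> (\<Sum>b\<in>B. ?ev b * (b \<bullet> x) * (b \<bullet> x))"
  proof (rule sum_mono)
    fix b assume "b \<in> B"
    then show "lambda_min T * (b \<bullet> x) * (b \<bullet> x) \<le> ?ev b * (b \<bullet> x) * (b \<bullet> x)"
      using lm(2) by (simp add: mult.assoc mult_right_mono)
  qed
  finally show "lambda_min T * (x \<bullet> x) \<le> x \<bullet> (T *v x)" using xT by simp
qed



lemma scaleR_mv: "(r *\<^sub>R W) *v (u::real^'n) = r *\<^sub>R (W *v u)"
  by (simp add: vec_eq_iff matrix_vector_mult_def sum_distrib_left mult.assoc)

lemma bl_quad: "bounded_linear (\<lambda>W::real^'n^'n. u \<bullet> (W *v u))"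
proof -
  have "linear (\<lambda>W::real^'n^'n. u \<bullet> (W *v u))"
    by (rule linearI) (simp_all add: matrix_vector_mult_add_rdistrib inner_add_right scaleR_mv)
  then show ?thesis by (simp add: linear_conv_bounded_linear)
qed

lemma cont_mv: "continuous_on UNIV (\<lambda>p::(real^'n^'m) \<times> (real^'n). fst p *v snd p)"
proof -
  have e: "(\<lambda>p::(real^'n^'m) \<times> (real^'n). fst p *v snd p) = (\<lambda>p. \<chi> i. \<Sum>j\<in>UNIV. fst p $ i $ j * snd p $ j)"
    by (simp add: matrix_vector_mult_def)
  show ?thesis unfolding e
    by (intro continuous_on_vec_lambda continuous_on_sum continuous_on_mult
        continuous_on_compose2[OF bounded_linear.continuous_on[OF bounded_linear_vec_nth] ] continuous_on_fst continuous_on_snd continuous_on_id) auto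
qed

lemma measurable_mv:
  fixes f :: "'a \<Rightarrow> real^'n^'m" and g :: "'a \<Rightarrow> real^'n"
  assumes "f \<in> borel_measurable M" "g \<in> borel_measurable M"
  shows "(\<lambda>x. f x *v g x) \<in> borel_measurable M"
  by (rule borel_measurable_continuous_Pair[OF assms cont_mv])

lemma step_eq:
  fixes A :: "real^'n^'m" and Om :: "real^'l^'n"
  assumes "A *v xs = b"
  shows "x + (Om ** pinv (transpose Om ** transpose A ** G ** A ** Om) ** transpose Om ** transpose A ** G) *v (b - A *v x)
       = x - (Om ** pinv (transpose Om ** (transpose A ** G ** A) ** Om) ** transpose Om) *v ((transpose A ** G ** A) *v (x - xs))"
proof -
  let ?W = "Om ** pinv (transpose Om ** (transpose A ** G ** A) ** Om) ** transpose Om"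
  have 1: "transpose Om ** transpose A ** G ** A ** Om = transpose Om ** (transpose A ** G ** A) ** Om"
    by (simp add: matrix_mul_assoc)
  have 2: "b - A *v x = (-1::real) *\<^sub>R (A *v (x - xs))"
    using assms by (simp add: matrix_vector_mult_diff_distrib)
  show ?thesis unfolding 1 2
    by (simp only: matrix_vector_mul_assoc[symmetric] matrix_vector_mult_scaleR) simp
qed

lemma W_props:
  fixes M :: "real^'n^'n" and Om :: "real^'l^'n"
  assumes M: "spsd M"
  defines "W \<equiv> Om ** pinv (transpose Om ** M ** Om) ** transpose Om"
  shows "sym_mat W" "W ** M ** W = W" "\<And>u. 0 \<le> u \<bullet> (W *v u)"
proof -
  let ?N = "transpose Om ** M ** Om"
  let ?X = "pinv ?N"
  have symM: "transpose M = M" using M by (simp add: spsd_def sym_mat_def)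
  have symN: "sym_mat ?N" unfolding sym_mat_def by (simp add: matrix_transpose_mul symM matrix_mul_assoc)
  have psdN: "spsd ?N" unfolding spsd_def
  proof (intro conjI allI symN)
    fix x
    have "x \<bullet> (?N *v x) = x \<bullet> (transpose Om *v (M *v (Om *v x)))"
      by (simp only: matrix_vector_mul_assoc[symmetric])
    also have "\<dots> = (Om *v x) \<bullet> (M *v (Om *v x))"
      using dot_transpose[of x "transpose Om" "M *v (Om *v x)"] by (simp only: transpose_transpose)
    finally have "x \<bullet> (?N *v x) = (Om *v x) \<bullet> (M *v (Om *v x))" .
    then show "0 \<le> x \<bullet> (?N *v x)" using M by (simp add: spsd_def)
  qed
  note P = pinv_sym[OF symN]
  have symX: "transpose ?X = ?X" using P(3) by (simp add: sym_mat_def)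
  show "sym_mat W" unfolding sym_mat_def W_def by (simp add: matrix_transpose_mul symX matrix_mul_assoc)
  have "W ** M ** W = Om ** (?X ** ?N ** ?X) ** transpose Om"
    unfolding W_def by (simp add: matrix_mul_assoc)
  then show "W ** M ** W = W" using P(2) by (simp add: W_def)
  fix u
  have "u \<bullet> (W *v u) = u \<bullet> (Om *v (?X *v (transpose Om *v u)))"
    unfolding W_def by (simp only: matrix_vector_mul_assoc[symmetric])
  also have "\<dots> = (transpose Om *v u) \<bullet> (?X *v (transpose Om *v u))"
    by (rule dot_transpose)
  finally have "u \<bullet> (W *v u) = (transpose Om *v u) \<bullet> (?X *v (transpose Om *v u))" .
  then show "0 \<le> u \<bullet> (W *v u)" using P(5)[OF psdN] by (simp add: spsd_def)
qed

lemma quad_step: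
  fixes M W :: "real^'n^'n"
  assumes "sym_mat M" "sym_mat W" "W ** M ** W = W"
  shows "sqnorm_M M (e - W *v (M *v e)) = sqnorm_M M e - (M *v e) \<bullet> (W *v (M *v e))"
proof -
  define u where "u = M *v e"
  define z where "z = W *v u"
  have a: "e \<bullet> (M *v z) = u \<bullet> z" unfolding u_def by (rule sym_dot[OF assms(1)])
  have b: "z \<bullet> (M *v e) = u \<bullet> z" unfolding u_def by (simp add: inner_commute)
  have c: "z \<bullet> (M *v z) = u \<bullet> z"
  proof -
    have "z \<bullet> (M *v z) = u \<bullet> (W *v (M *v z))" unfolding z_def by (rule sym_dot[OF assms(2), symmetric])
    also have "W *v (M *v z) = z" unfolding z_def by (simp only: matrix_vector_mul_assoc matrix_mul_assoc assms(3))
    finally show ?thesis .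
  qed
  have "sqnorm_M M (e - z) = e \<bullet> (M *v e) - e \<bullet> (M *v z) - z \<bullet> (M *v e) + z \<bullet> (M *v z)"
    unfolding sqnorm_M_def by (simp add: matrix_vector_mult_diff_distrib inner_diff_left inner_diff_right)
  also have "\<dots> = sqnorm_M M e - u \<bullet> z" unfolding a b c sqnorm_M_def by simp
  finally show ?thesis unfolding z_def u_def .
qed

lemma seq_decomp:
  fixes D :: "'a measure" and f :: "(nat \<Rightarrow> 'a) \<Rightarrow> real"
  assumes D: "prob_space D"
    and fm: "f \<in> borel_measurable (PiM UNIV (\<lambda>_. D))"
    and fb: "\<And>\<omega>. \<bar>f \<omega>\<bar> \<le> c"
  shows "integrable D (\<lambda>s. \<integral>\<omega>. f (case_nat s \<omega>) \<partial>PiM UNIV (\<lambda>_. D))"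
    and "(\<integral>\<omega>. f \<omega> \<partial>PiM UNIV (\<lambda>_. D)) = (\<integral>s. (\<integral>\<omega>. f (case_nat s \<omega>) \<partial>PiM UNIV (\<lambda>_. D)) \<partial>D)"
proof -
  interpret S: sequence_space D
    unfolding sequence_space_def by (rule product_prob_spaceI) (rule D)
  let ?P = "PiM (UNIV::nat set) (\<lambda>_. D)"
  have Pprob: "prob_space ?P" by (rule prob_space_PiM) (rule D)
  interpret PP: pair_prob_space D ?P
    by (simp add: pair_prob_space_def pair_sigma_finite_def D Pprob prob_space_imp_sigma_finite)
  have meas: "(\<lambda>(s, \<omega>). case_nat s \<omega>) \<in> measurable (D \<Otimes>\<^sub>M ?P) ?P"
    by measurable
  have gm: "(\<lambda>z. f (case_nat (fst z) (snd z))) \<in> borel_measurable (D \<Otimes>\<^sub>M ?P)"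
    using measurable_comp[OF meas fm] by (simp add: comp_def split_beta)
  have int: "integrable (D \<Otimes>\<^sub>M ?P) (\<lambda>z. f (case_nat (fst z) (snd z)))"
    by (rule PP.P.integrable_const_bound[of _ c]) (use gm fb in auto)
  show "integrable D (\<lambda>s. \<integral>\<omega>. f (case_nat s \<omega>) \<partial>?P)"
    using PP.integrable_fst'[OF int] by simp
  have "(\<integral>\<omega>. f \<omega> \<partial>?P) = (\<integral>\<omega>. f \<omega> \<partial>distr (D \<Otimes>\<^sub>M ?P) ?P (\<lambda>(s, \<omega>). case_nat s \<omega>))"
    using S.PiM_iter by simp
  also have "\<dots> = (\<integral>z. f (case_nat (fst z) (snd z)) \<partial>(D \<Otimes>\<^sub>M ?P))"
    by (subst integral_distr[OF meas fm]) (simp add: split_beta)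
  also have "\<dots> = (\<integral>s. (\<integral>\<omega>. f (case_nat s \<omega>) \<partial>?P) \<partial>D)"
    using PP.integral_fst'[OF int] by simp
  finally show "(\<integral>\<omega>. f \<omega> \<partial>?P) = (\<integral>s. (\<integral>\<omega>. f (case_nat s \<omega>) \<partial>?P) \<partial>D)" .
qed


lemma transpose_bl: "bounded_linear (transpose :: real^'n^'m \<Rightarrow> real^'m^'n)"
proof -
  have "linear (transpose :: real^'n^'m \<Rightarrow> real^'m^'n)"
    by (rule linearI) (simp_all add: transpose_def vec_eq_iff)
  then show ?thesis by (simp add: linear_conv_bounded_linear)
qed

theorem mainTheorem1:
  fixes A :: "real^'n^'m" and b :: "real^'m" and xs :: "real^'n"
    and G :: "real^'m^'m" and D :: "(real^'l^'n) measure" and x0 :: "real^'n"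
  assumes full_rank: "rank A = CARD('n)"
    and sol: "A *v xs = b"
    and G_spd: "spd G"
    and D_prob: "prob_space D"
    and D_sets: "sets D = sets borel"
    and W_int: "integrable D (\<lambda>Om. Om ** pinv (transpose Om ** (transpose A ** G ** A) ** Om) ** transpose Om)"
  defines "Gh \<equiv> transpose A ** G ** A"
    and "EW \<equiv> integral\<^sup>L D (\<lambda>Om. Om ** pinv (transpose Om ** (transpose A ** G ** A) ** Om) ** transpose Om)"
    and "P \<equiv> PiM (UNIV :: nat set) (\<lambda>_. D)"
  defines "\<rho> \<equiv> 1 - lambda_min (mat_sqrt Gh ** EW ** mat_sqrt Gh)"
  shows "(\<forall>k. (\<integral>\<omega>. sqnorm_M Gh (sketch_iter A b G x0 \<omega> (Suc k) - xs) \<partial>P)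
               \<le> \<rho> * (\<integral>\<omega>. sqnorm_M Gh (sketch_iter A b G x0 \<omega> k - xs) \<partial>P))
       \<and> (\<forall>k. (\<integral>\<omega>. sqnorm_M Gh (sketch_iter A b G x0 \<omega> k - xs) \<partial>P)
               \<le> \<rho> ^ k * sqnorm_M Gh (x0 - xs))
       \<and> (spd EW \<longrightarrow> \<rho> < 1)"
proof -
  define Wf where "Wf = (\<lambda>Om::real^'l^'n. Om ** pinv (transpose Om ** Gh ** Om) ** transpose Om)"
  have Wint: "integrable D Wf" using W_int by (simp add: Wf_def Gh_def)
  have EWd: "EW = integral\<^sup>L D Wf" by (simp add: EW_def Wf_def Gh_def)
  have Wm: "Wf \<in> borel_measurable D" using Wint by (rule borel_measurable_integrable)
  interpret Dp: prob_space D by (rule D_prob)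
  have Pprob: "prob_space P" unfolding P_def by (rule prob_space_PiM) (rule D_prob)
  have symG: "transpose G = G" using G_spd by (simp add: spd_def sym_mat_def)
  have symGh: "sym_mat Gh" unfolding sym_mat_def Gh_def
    by (simp add: matrix_transpose_mul symG matrix_mul_assoc)
  have qA: "sqnorm_M Gh y = (A *v y) \<bullet> (G *v (A *v y))" for y
  proof -
    have "sqnorm_M Gh y = y \<bullet> (transpose A *v (G *v (A *v y)))"
      unfolding sqnorm_M_def Gh_def by (simp only: matrix_vector_mul_assoc[symmetric])
    also have "\<dots> = (A *v y) \<bullet> (G *v (A *v y))"
      using dot_transpose[of y "transpose A" "G *v (A *v y)"] by (simp only: transpose_transpose)
    finally show ?thesis .
  qed
  have q_nonneg: "0 \<le> sqnorm_M Gh y" for y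
  proof (cases "A *v y = 0")
    case True then show ?thesis by (simp add: qA)
  next
    case False then show ?thesis using G_spd by (simp add: qA spd_def less_imp_le)
  qed
  have q_pos: "0 < sqnorm_M Gh y" if "y \<noteq> 0" for y
  proof -
    have "inj ((*v) A)" using full_rank by (simp add: full_rank_injective)
    then have "A *v y \<noteq> 0" using that by (metis injD matrix_vector_mult_0_right)
    then show ?thesis using G_spd by (simp add: qA spd_def)
  qed
  have spsdGh: "spsd Gh" using symGh q_nonneg by (simp add: spsd_def sqnorm_M_def)
  note WP = W_props[OF spsdGh]
  have Wsym: "sym_mat (Wf Om)" and WGW: "Wf Om ** Gh ** Wf Om = Wf Om" and Wpsd: "0 \<le> u \<bullet> (Wf Om *v u)"
    for Om u using WP[where Om=Om] by (simp_all add: Wf_def)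
  define stp where "stp = (\<lambda>x Om. x - Wf Om *v (Gh *v (x - xs)))"
  have stp_eq: "x + (Om ** pinv (transpose Om ** transpose A ** G ** A ** Om) ** transpose Om ** transpose A ** G) *v (b - A *v x) = stp x Om" for x Om
    unfolding stp_def Wf_def Gh_def by (rule step_eq[OF sol])
  have sk_suc: "sketch_iter A b G x \<omega> (Suc k) = stp (sketch_iter A b G x \<omega> k) (\<omega> k)" for x \<omega> k
    by (simp add: Let_def stp_eq)
  have shift: "sketch_iter A b G x (case_nat Om \<omega>) (Suc k) = sketch_iter A b G (stp x Om) \<omega> k" for x Om \<omega> k
  proof (induction k)
    case 0 then show ?case by (simp del: sketch_iter.simps(2) add: sk_suc)
  next
    case (Suc k) then show ?case by (simp del: sketch_iter.simps(2) add: sk_suc)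
  qed
  have qstep: "sqnorm_M Gh (stp x Om - xs) = sqnorm_M Gh (x - xs) - (Gh *v (x - xs)) \<bullet> (Wf Om *v (Gh *v (x - xs)))"
    for x Om
  proof -
    have eq: "stp x Om - xs = (x - xs) - Wf Om *v (Gh *v (x - xs))" by (simp add: stp_def)
    show ?thesis unfolding eq by (rule quad_step[OF symGh Wsym WGW])
  qed
  have decr: "sqnorm_M Gh (stp x Om - xs) \<le> sqnorm_M Gh (x - xs)" for x Om
    using qstep[of x Om] Wpsd[of "Gh *v (x - xs)" Om] by linarith
  have bound: "0 \<le> sqnorm_M Gh (sketch_iter A b G x \<omega> k - xs) \<and> sqnorm_M Gh (sketch_iter A b G x \<omega> k - xs) \<le> sqnorm_M Gh (x - xs)"
    for x and \<omega> :: "nat \<Rightarrow> real^'l^'n" and k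
  proof (induction k)
    case 0 then show ?case using q_nonneg by simp
  next
    case (Suc k) then show ?case using q_nonneg decr[of "sketch_iter A b G x \<omega> k" "\<omega> k"] sk_suc
      by (metis order_trans)
  qed
  have skm: "(\<lambda>\<omega>. sketch_iter A b G x \<omega> k) \<in> borel_measurable P" for x k
  proof (induction k)
    case 0 then show ?case by simp
  next
    case (Suc k)
    have c: "(\<lambda>\<omega>. Wf (\<omega> k)) \<in> borel_measurable P"
    proof -
      have ck: "(\<lambda>\<omega>. \<omega> k) \<in> measurable P D"
        unfolding P_def using measurable_component_singleton[of k UNIV "\<lambda>_. D"] by simp
      show ?thesis using measurable_compose[OF ck Wm] .
    qed
    have "(\<lambda>\<omega>. sketch_iter A b G x \<omega> k - Wf (\<omega> k) *v (Gh *v (sketch_iter A b G x \<omega> k - xs))) \<in> borel_measurable P"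
      by (intro borel_measurable_diff measurable_mv c Suc measurable_const) simp_all
    then show ?case by (simp del: sketch_iter.simps(2) add: sk_suc stp_def)
  qed
  have qm: "(\<lambda>\<omega>. sqnorm_M Gh (sketch_iter A b G x \<omega> k - xs)) \<in> borel_measurable P" for x k
    unfolding sqnorm_M_def
    by (intro borel_measurable_inner borel_measurable_diff measurable_mv skm measurable_const) simp_all
  define E where "E = (\<lambda>k x. \<integral>\<omega>. sqnorm_M Gh (sketch_iter A b G x \<omega> k - xs) \<partial>P)"
  have E0: "E 0 x = sqnorm_M Gh (x - xs)" for x
    using prob_space.prob_space[OF Pprob] by (simp add: E_def)
  have decomp: "integrable D (\<lambda>Om. E k (stp x Om)) \<and> E (Suc k) x = (\<integral>Om. E k (stp x Om) \<partial>D)" for k x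
  proof -
    have fb: "\<bar>sqnorm_M Gh (sketch_iter A b G x \<omega> (Suc k) - xs)\<bar> \<le> sqnorm_M Gh (x - xs)" for \<omega> :: "nat \<Rightarrow> real^'l^'n"
      using bound[of x \<omega> "Suc k"] by simp
    note sd = seq_decomp[OF D_prob qm[of x "Suc k", unfolded P_def] fb]
    show ?thesis using sd unfolding E_def P_def shift by simp
  qed
  have oint: "integrable D (\<lambda>Om. sqnorm_M Gh (stp x Om - xs))" for x
    unfolding qstep
    by (intro Bochner_Integration.integrable_diff Dp.integrable_const
        integrable_bounded_linear[OF bl_quad Wint])
  have oeq: "(\<integral>Om. sqnorm_M Gh (stp x Om - xs) \<partial>D) = sqnorm_M Gh (x - xs) - (Gh *v (x - xs)) \<bullet> (EW *v (Gh *v (x - xs)))" for x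
    unfolding qstep EWd
    by (subst Bochner_Integration.integral_diff[OF Dp.integrable_const integrable_bounded_linear[OF bl_quad Wint]])
       (simp add: integral_bounded_linear[OF bl_quad Wint] Dp.prob_space)
  define Sq where "Sq = mat_sqrt Gh"
  have Sq: "spsd Sq" "Sq ** Sq = Gh" using mat_sqrt[OF spsdGh] by (simp_all add: Sq_def)
  have symSq: "sym_mat Sq" using Sq(1) by (simp add: spsd_def)
  have symEW: "transpose EW = EW"
  proof -
    have "transpose EW = (\<integral>Om. transpose (Wf Om) \<partial>D)"
      unfolding EWd by (rule integral_bounded_linear[OF transpose_bl Wint, symmetric])
    also have "\<dots> = EW" unfolding EWd using Wsym by (simp add: sym_mat_def)
    finally show ?thesis .
  qed
  define T where "T = Sq ** EW ** Sq"
  have symT: "sym_mat T" unfolding T_def sym_mat_def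
    using symSq symEW by (simp add: sym_mat_def matrix_transpose_mul matrix_mul_assoc)
  have Tq: "y \<bullet> (T *v y) = (Sq *v y) \<bullet> (EW *v (Sq *v y))" for y
  proof -
    have "y \<bullet> (T *v y) = y \<bullet> (Sq *v (EW *v (Sq *v y)))"
      unfolding T_def by (simp only: matrix_vector_mul_assoc[symmetric])
    also have "\<dots> = (Sq *v y) \<bullet> (EW *v (Sq *v y))" by (rule sym_dot[OF symSq])
    finally show ?thesis .
  qed
  have rho_def': "\<rho> = 1 - lambda_min T" unfolding \<rho>_def T_def Sq_def ..
  have ray: "lambda_min T * sqnorm_M Gh e \<le> (Gh *v e) \<bullet> (EW *v (Gh *v e))" for e
  proof -
    have 1: "Gh *v e = Sq *v (Sq *v e)" using Sq(2) by (simp add: matrix_vector_mul_assoc)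
    have 2: "sqnorm_M Gh e = (Sq *v e) \<bullet> (Sq *v e)"
      unfolding sqnorm_M_def 1 by (rule sym_dot[OF symSq])
    have 3: "(Gh *v e) \<bullet> (EW *v (Gh *v e)) = (Sq *v e) \<bullet> (T *v (Sq *v e))"
      unfolding Tq 1 by (rule refl)
    show ?thesis unfolding 2 3 by (rule eig_facts(2)[OF symT])
  qed
  have onestep: "(\<integral>Om. sqnorm_M Gh (stp x Om - xs) \<partial>D) \<le> \<rho> * sqnorm_M Gh (x - xs)" for x
    unfolding oeq rho_def' using ray[of "x - xs"] by (simp add: algebra_simps)
  have rho_nn: "0 \<le> \<rho>"
  proof -
    define e0 where "e0 = (axis undefined 1 :: real^'n)"
    have e0: "e0 \<noteq> 0" by (simp add: e0_def axis_eq_0_iff)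
    have "0 \<le> (\<integral>Om. sqnorm_M Gh (stp (xs + e0) Om - xs) \<partial>D)"
      by (rule Bochner_Integration.integral_nonneg) (rule q_nonneg)
    also have "\<dots> \<le> \<rho> * sqnorm_M Gh e0" using onestep[of "xs + e0"] by simp
    finally show ?thesis using q_pos[OF e0] by (simp add: zero_le_mult_iff)
  qed
  have claim2: "E k x \<le> \<rho> ^ k * sqnorm_M Gh (x - xs)" for k x
  proof (induction k arbitrary: x)
    case 0 then show ?case by (simp add: E0)
  next
    case (Suc k)
    have "E (Suc k) x = (\<integral>Om. E k (stp x Om) \<partial>D)" using decomp by simp
    also have "\<dots> \<le> (\<integral>Om. \<rho> ^ k * sqnorm_M Gh (stp x Om - xs) \<partial>D)"
      by (rule integral_mono) (use decomp oint Suc in auto)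
    also have "\<dots> = \<rho> ^ k * (\<integral>Om. sqnorm_M Gh (stp x Om - xs) \<partial>D)" by simp
    also have "\<dots> \<le> \<rho> ^ k * (\<rho> * sqnorm_M Gh (x - xs))"
      by (rule mult_left_mono[OF onestep]) (simp add: rho_nn)
    finally show ?case by (simp add: mult_ac)
  qed
  have claim1: "E (Suc k) x \<le> \<rho> * E k x" for k x
  proof (induction k arbitrary: x)
    case 0
    have "E (Suc 0) x = (\<integral>Om. sqnorm_M Gh (stp x Om - xs) \<partial>D)" using decomp[of 0 x] by (simp add: E0)
    then show ?case using onestep[of x] by (simp add: E0)
  next
    case (Suc k)
    have "E (Suc (Suc k)) x = (\<integral>Om. E (Suc k) (stp x Om) \<partial>D)" using decomp by simp
    also have "\<dots> \<le> (\<integral>Om. \<rho> * E k (stp x Om) \<partial>D)"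
    proof (rule integral_mono)
      show "integrable D (\<lambda>Om. E (Suc k) (stp x Om))" using decomp[of "Suc k" x] by (rule conjunct1)
      have "integrable D (\<lambda>Om. E k (stp x Om))" using decomp[of k x] by (rule conjunct1)
      then show "integrable D (\<lambda>Om. \<rho> * E k (stp x Om))" by (rule integrable_mult_right)
      show "\<And>Om. Om \<in> space D \<Longrightarrow> E (Suc k) (stp x Om) \<le> \<rho> * E k (stp x Om)" by (rule Suc.IH)
    qed
    also have "\<dots> = \<rho> * (\<integral>Om. E k (stp x Om) \<partial>D)" by simp
    also have "\<dots> = \<rho> * E (Suc k) x" using decomp by simp
    finally show ?case .
  qed
  have claim3: "\<rho> < 1" if spd: "spd EW"
  proof -
    obtain v where v: "v \<noteq> 0" "T *v v = lambda_min T *\<^sub>R v" using eig_facts(1)[OF symT] by blast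
    have "Sq *v v \<noteq> 0"
    proof
      assume "Sq *v v = 0"
      then have "Gh *v v = 0" using Sq(2) by (metis matrix_vector_mul_assoc matrix_vector_mult_0_right)
      then show False using q_pos[OF v(1)] by (simp add: sqnorm_M_def)
    qed
    then have "0 < v \<bullet> (T *v v)" unfolding Tq using spd by (simp add: spd_def)
    also have "v \<bullet> (T *v v) = lambda_min T * (v \<bullet> v)" using v(2) by simp
    finally have "0 < lambda_min T * (v \<bullet> v)" .
    moreover have "0 \<le> v \<bullet> v" by simp
    ultimately have "0 < lambda_min T" by (simp add: zero_less_mult_iff)
    then show ?thesis unfolding rho_def' by simp
  qed
  show ?thesis using claim1 claim2 claim3 unfolding E_def by blast
qed


end
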